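(* Let $R\subset\mathbb{R}^N$, $R_+$, $\kappa$, $\gamma_\kappa$, $\Delta_\kappa$ be as in the context, $\omega>0$, $g(x)=\exp(-\tfrac\omega2|x|^2)$ and $\mathcal{H}=\omega^2|x|^2-\Delta_\kappa$. Suppose $p$ is a polynomial with $p\in\mathcal{P}_{\le n}$, $\pi_np\neq0$, and $\mathcal{H}(pg)=E\,pg$ for some scalar $E$. Then $E=\omega(N+2\gamma_\kappa+2n)$; $\pi_{n-2i+1}p=0$ for all integers $1\le i\le\frac{n+1}{2}$; $\pi_{n-2i}p=\frac{1}{i!}\left(-\frac{\Delta_\kappa}{4\omega}\right)^i\pi_np$ for all integers $0\le i\le\frac n2$; and $p=\exp\left(-\frac{\Delta_\kappa}{4\omega}\right)\pi_np$.
   Context: Vectors in $\mathbb{R}^N$ are row vectors, $\langle x,y\rangle=\sum x_iy_i$, $|x|^2=\langle x,x\rangle$. For $v\neq0$, $x\sigma_v=x-2\frac{\langle x,v\rangle}{|v|^2}v$. $R$ is a finite reduced root system (finite set of nonzero vectors, closed under all $\sigma_v$, $v\in R$, with $u,cu\in R\Rightarrow c=\pm1$), $R_+=\{v\in R:\langle u_0,v\rangle>0\}$ for a fixed generic $u_0$; multiplicity $\kappa_v$ constant on orbits of the reflection group (real values or formal parameters); $\gamma_\kappa=\sum_{v\in R_+}\kappa_v$. Dunkl operators $\mathcal{D}_if(x)=\partial_if(x)+\sum_{v\in R_+}\kappa_v\frac{f(x)-f(x\sigma_v)}{\langle x,v\rangle}v_i$, $\Delta_\kappa=\sum_i\mathcal{D}_i^2$.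 $\mathcal{P}_k$ denotes homogeneous polynomials of degree $k$, $\mathcal{P}_{\le n}=\mathcal{P}_0+\dots+\mathcal{P}_n$, and $\pi_k$ is the projection of polynomials onto $\mathcal{P}_k$ (with $\pi_k=0$ for $k<0$). The operator $\exp(-\Delta_\kappa/(4\omega))=\sum_{j\ge0}\frac{1}{j!}(-\Delta_\kappa/(4\omega))^j$ is a finite sum on each polynomial since $\Delta_\kappa$ lowers degree by 2. *)

theory Defs
  imports "HOL-Analysis.Analysis"
begin

definition refl :: "real^'n \<Rightarrow> real^'n \<Rightarrow> real^'n" where
  "refl v x = x - (2 * (x \<bullet> v) / (v \<bullet> v)) *\<^sub>R v"

definition root_system :: "(real^'n) set \<Rightarrow> bool" where
  "root_system R \<longleftrightarrow> finite R \<and> 0 \<notin> R \<and>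
     (\<forall>u\<in>R. \<forall>v\<in>R. refl v u \<in> R) \<and>
     (\<forall>u\<in>R. \<forall>c::real. c *\<^sub>R u \<in> R \<longrightarrow> c = 1 \<or> c = -1)"

definition pos_roots :: "(real^'n) set \<Rightarrow> real^'n \<Rightarrow> (real^'n) set" where
  "pos_roots R u0 = {v\<in>R. u0 \<bullet> v > 0}"

definition mult_fn :: "(real^'n) set \<Rightarrow> (real^'n \<Rightarrow> real) \<Rightarrow> bool" where
  "mult_fn R \<kappa> \<longleftrightarrow> (\<forall>u\<in>R. \<forall>v\<in>R. \<kappa> (refl v u) = \<kappa> u)"

definition gamma_k :: "(real^'n) set \<Rightarrow> real^'n \<Rightarrow> (real^'n \<Rightarrow> real) \<Rightarrow> real" where
  "gamma_k R u0 \<kappa> = (\<Sum>v\<in>pos_roots R u0. \<kappa> v)"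

definition regular_set :: "(real^'n) set \<Rightarrow> (real^'n) set" where
  "regular_set R = {x. \<forall>v\<in>R. x \<bullet> v \<noteq> 0}"

definition partial :: "'n \<Rightarrow> (real^'n \<Rightarrow> real) \<Rightarrow> real^'n \<Rightarrow> real" where
  "partial i f x = deriv (\<lambda>t. f (x + t *\<^sub>R axis i 1)) 0"

definition dunkl :: "(real^'n) set \<Rightarrow> real^'n \<Rightarrow> (real^'n \<Rightarrow> real) \<Rightarrow> 'n
    \<Rightarrow> (real^'n \<Rightarrow> real) \<Rightarrow> real^'n \<Rightarrow> real" where
  "dunkl R u0 \<kappa> i f x = partial i f x +
     (\<Sum>v\<in>pos_roots R u0. \<kappa> v * (f x - f (refl v x)) / (x \<bullet> v) * v $ i)"

definition dunkl_lap :: "(real^'n) set \<Rightarrow> real^'n \<Rightarrow> (real^'n \<Rightarrow> real)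
    \<Rightarrow> (real^'n \<Rightarrow> real) \<Rightarrow> real^'n \<Rightarrow> real" where
  "dunkl_lap R u0 \<kappa> f = (\<lambda>x. \<Sum>i\<in>UNIV. dunkl R u0 \<kappa> i (dunkl R u0 \<kappa> i f) x)"

text \<open>Polynomials on R^N as finitely supported coefficient functions on exponent vectors.\<close>
definition mono :: "('n::finite \<Rightarrow> nat) \<Rightarrow> real^'n \<Rightarrow> real" where
  "mono \<alpha> x = (\<Prod>i\<in>UNIV. (x $ i) ^ (\<alpha> i))"

definition mdeg :: "('n::finite \<Rightarrow> nat) \<Rightarrow> nat" where
  "mdeg \<alpha> = (\<Sum>i\<in>UNIV. \<alpha> i)"

definition is_poly :: "(('n \<Rightarrow> nat) \<Rightarrow> real) \<Rightarrow> bool" where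
  "is_poly c \<longleftrightarrow> finite {\<alpha>. c \<alpha> \<noteq> 0}"

definition peval :: "(('n::finite \<Rightarrow> nat) \<Rightarrow> real) \<Rightarrow> real^'n \<Rightarrow> real" where
  "peval c x = (\<Sum>\<alpha>\<in>{\<alpha>. c \<alpha> \<noteq> 0}. c \<alpha> * mono \<alpha> x)"

definition hom_part :: "nat \<Rightarrow> (('n::finite \<Rightarrow> nat) \<Rightarrow> real) \<Rightarrow> ('n \<Rightarrow> nat) \<Rightarrow> real" where
  "hom_part k c = (\<lambda>\<alpha>. if mdeg \<alpha> = k then c \<alpha> else 0)"

definition deg_le :: "nat \<Rightarrow> (('n::finite \<Rightarrow> nat) \<Rightarrow> real) \<Rightarrow> bool" where
  "deg_le n c \<longleftrightarrow> (\<forall>\<alpha>. c \<alpha> \<noteq> 0 \<longrightarrow> mdeg \<alpha> \<le> n)"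

end

theory Submission
  imports Defs "HOL-Computational_Algebra.Polynomial"
begin

lemma refl_inner: "refl v x \<bullet> u = x \<bullet> refl v u"
  by (simp add: refl_def inner_diff_left inner_diff_right inner_commute algebra_simps)

lemma refl_scale: "refl v (t *\<^sub>R x) = t *\<^sub>R refl v x"
  by (simp add: refl_def algebra_simps)

lemma axis_nth_gen: "axis k (1::real) $ j = (if j = k then 1 else 0)"
  by (simp add: axis_def)

lemma refl_linear_nth: "refl v h $ j = (\<Sum>k\<in>UNIV. h $ k * (refl v (axis k 1) $ j))"
proof -
  have "(\<Sum>k\<in>UNIV. h $ k * (refl v (axis k 1) $ j))
     = (\<Sum>k\<in>UNIV. h $ k * (if k = j then 1 else 0)) - (\<Sum>k\<in>UNIV. h $ k * v $ k) * (2 * v $ j / (v \<bullet> v))"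
    by (simp add: refl_def axis_nth_gen inner_axis' right_diff_distrib sum_subtractf sum_distrib_right mult.assoc)
       (simp add: sum_divide_distrib mult_ac eq_commute[of j])
  also have "\<dots> = h $ j - 2 * (h \<bullet> v) / (v \<bullet> v) * v $ j"
    by (simp add: inner_vec_def if_distrib cong: if_cong)
  finally show ?thesis by (simp add: refl_def)
qed

lemma refl_norm2: "refl v x \<bullet> refl v x = x \<bullet> x"
proof (cases "v \<bullet> v = 0")
  case True then show ?thesis by (simp add: refl_def)
next
  case False
  then show ?thesis
    by (simp add: refl_def inner_diff_left inner_diff_right inner_commute field_simps power2_eq_square)
qed

lemma refl_norm: "norm (refl v x) = norm x"
  using refl_norm2 by (metis norm_eq_sqrt_inner)

lemma refl_self: "refl v x \<bullet> v = - (x \<bullet> v)"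
proof (cases "v \<bullet> v = 0")
  case True then show ?thesis by (simp add: refl_def)
next
  case False then show ?thesis by (simp add: refl_def inner_diff_left field_simps)
qed

lemma refl_bl: "bounded_linear (refl v)"
proof -
  have "refl v = (\<lambda>y. y - ((2 / (v \<bullet> v)) * (y \<bullet> v)) *\<^sub>R v)"
    by (auto simp: refl_def fun_eq_iff)
  moreover have "bounded_linear (\<lambda>y. y - ((2 / (v \<bullet> v)) * (y \<bullet> v)) *\<^sub>R v)"
    by (intro bounded_linear_intros)
  ultimately show ?thesis by simp
qed

lemma refl_deriv: "(refl v has_derivative refl v) (at x)"
  using refl_bl bounded_linear_imp_has_derivative by blast

inductive nice :: "(real^'n) set \<Rightarrow> (real^'n \<Rightarrow> real) \<Rightarrow> bool" for R where
  nc: "nice R (\<lambda>x. c)"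
| nx: "nice R (\<lambda>x. x $ j)"
| nadd: "nice R f \<Longrightarrow> nice R g \<Longrightarrow> nice R (\<lambda>x. f x + g x)"
| nmul: "nice R f \<Longrightarrow> nice R g \<Longrightarrow> nice R (\<lambda>x. f x * g x)"
| nrefl: "nice R f \<Longrightarrow> v \<in> R \<Longrightarrow> nice R (\<lambda>x. f (refl v x))"
| ndiv: "nice R f \<Longrightarrow> v \<in> R \<Longrightarrow> nice R (\<lambda>x. f x / (x \<bullet> v))"

lemma nice_cmul: "nice R f \<Longrightarrow> nice R (\<lambda>x. c * f x)"
  using nmul[OF nc] by blast

lemma nice_diff: "nice R f \<Longrightarrow> nice R g \<Longrightarrow> nice R (\<lambda>x. f x - g x)"
  using nadd[OF _ nice_cmul[of R g "-1"]] by simp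

lemma nice_sum: "finite A \<Longrightarrow> (\<And>a. a \<in> A \<Longrightarrow> nice R (f a)) \<Longrightarrow> nice R (\<lambda>x. \<Sum>a\<in>A. f a x)"
  by (induction A rule: finite_induct) (auto intro: nc nadd)

lemma regular_open: "finite R \<Longrightarrow> open (regular_set R)"
proof -
  assume "finite R"
  have "regular_set R = (\<Inter>v\<in>R. {x. x \<bullet> v \<noteq> 0})" by (auto simp: regular_set_def)
  moreover have "open (\<Inter>v\<in>R. {x. x \<bullet> v \<noteq> (0::real)})"
    using \<open>finite R\<close> by (intro open_INT ballI open_Collect_neq continuous_intros) auto
  ultimately show ?thesis by simp
qed

locale dsetup =
  fixes R :: "(real^'n) set"
  assumes finR: "finite R" and zR: "0 \<notin> R" and clR: "\<forall>u\<in>R. \<forall>v\<in>R. refl v u \<in> R"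
begin

abbreviation "U \<equiv> regular_set R"

lemma openU: "open U" using regular_open[OF finR] .

lemma refl_U: "x \<in> U \<Longrightarrow> v \<in> R \<Longrightarrow> refl v x \<in> U"
  using clR by (auto simp: regular_set_def refl_inner)

lemma scale_U: "x \<in> U \<Longrightarrow> t \<noteq> 0 \<Longrightarrow> t *\<^sub>R x \<in> U"
  by (auto simp: regular_set_def)

lemma nice_deriv: "nice R f \<Longrightarrow> \<exists>F. (\<forall>j. nice R (F j)) \<and>
   (\<forall>x\<in>U. (f has_derivative (\<lambda>h. \<Sum>j\<in>UNIV. h $ j * F j x)) (at x))"
proof (induction rule: nice.induct)
  case (nc c)
  show ?case
    by (rule exI[of _ "\<lambda>j x. 0"]) (auto intro: nice.nc)
next
  case (nx j)
  show ?case
  proof (rule exI[of _ "\<lambda>k x. if k = j then 1 else 0"], intro conjI allI ballI)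
    fix k show "nice R (\<lambda>x::real^'n. if k = j then 1 else 0)" by (rule nice.nc)
  next
    fix x :: "real^'n"
    show "((\<lambda>x. x $ j) has_derivative (\<lambda>h. \<Sum>k\<in>UNIV. h $ k * (if k = j then 1 else 0))) (at x)"
      by (rule has_derivative_eq_rhs[OF bounded_linear_imp_has_derivative[OF bounded_linear_vec_nth]])
         (simp add: fun_eq_iff if_distrib cong: if_cong)
  qed
next
  case (nadd f g)
  then obtain F G where F: "\<forall>j. nice R (F j)" "\<forall>x\<in>U. (f has_derivative (\<lambda>h. \<Sum>j\<in>UNIV. h $ j * F j x)) (at x)"
    and G: "\<forall>j. nice R (G j)" "\<forall>x\<in>U. (g has_derivative (\<lambda>h. \<Sum>j\<in>UNIV. h $ j * G j x)) (at x)"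
    by blast
  show ?case
  proof (rule exI[of _ "\<lambda>j x. F j x + G j x"], intro conjI allI ballI)
    fix j show "nice R (\<lambda>x. F j x + G j x)" using F G by (auto intro: nice.nadd)
  next
    fix x assume "x \<in> U"
    show "((\<lambda>x. f x + g x) has_derivative (\<lambda>h. \<Sum>j\<in>UNIV. h $ j * (F j x + G j x))) (at x)"
      by (rule has_derivative_eq_rhs[OF has_derivative_add[OF F(2)[rule_format, OF \<open>x\<in>U\<close>] G(2)[rule_format, OF \<open>x\<in>U\<close>]]])
         (simp add: fun_eq_iff distrib_left sum.distrib)
  qed
next
  case (nmul f g)
  then obtain F G where F: "\<forall>j. nice R (F j)" "\<forall>x\<in>U. (f has_derivative (\<lambda>h. \<Sum>j\<in>UNIV. h $ j * F j x)) (at x)"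
    and G: "\<forall>j. nice R (G j)" "\<forall>x\<in>U. (g has_derivative (\<lambda>h. \<Sum>j\<in>UNIV. h $ j * G j x)) (at x)"
    by blast
  show ?case
  proof (rule exI[of _ "\<lambda>j x. f x * G j x + F j x * g x"], intro conjI allI ballI)
    fix j show "nice R (\<lambda>x. f x * G j x + F j x * g x)" using F G nmul by (auto intro!: nice.nadd nice.nmul)
  next
    fix x assume "x \<in> U"
    show "((\<lambda>x. f x * g x) has_derivative (\<lambda>h. \<Sum>j\<in>UNIV. h $ j * (f x * G j x + F j x * g x))) (at x)"
      by (rule has_derivative_eq_rhs[OF has_derivative_mult[OF F(2)[rule_format, OF \<open>x\<in>U\<close>] G(2)[rule_format, OF \<open>x\<in>U\<close>]]])
         (simp add: fun_eq_iff distrib_left sum.distrib sum_distrib_left sum_distrib_right algebra_simps)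
  qed
next
  case (nrefl f v)
  then obtain F where F: "\<forall>j. nice R (F j)" "\<forall>x\<in>U. (f has_derivative (\<lambda>h. \<Sum>j\<in>UNIV. h $ j * F j x)) (at x)"
    by blast
  show ?case
  proof (rule exI[of _ "\<lambda>k x. \<Sum>j\<in>UNIV. refl v (axis k 1) $ j * F j (refl v x)"], intro conjI allI ballI)
    fix k show "nice R (\<lambda>x. \<Sum>j\<in>UNIV. refl v (axis k 1) $ j * F j (refl v x))"
      using F nrefl by (auto intro!: nice_sum nice_cmul nice.nrefl)
  next
    fix x assume "x \<in> U"
    then have "refl v x \<in> U" using refl_U nrefl by blast
    have "((f \<circ> refl v) has_derivative ((\<lambda>h. \<Sum>j\<in>UNIV. h $ j * F j (refl v x)) \<circ> refl v)) (at x)"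
      by (rule diff_chain_at[OF refl_deriv F(2)[rule_format, OF \<open>refl v x \<in> U\<close>]])
    then have "((\<lambda>x. f (refl v x)) has_derivative (\<lambda>h. \<Sum>j\<in>UNIV. refl v h $ j * F j (refl v x))) (at x)"
      by (simp add: o_def)
    then show "((\<lambda>x. f (refl v x)) has_derivative (\<lambda>h. \<Sum>k\<in>UNIV. h $ k * (\<Sum>j\<in>UNIV. refl v (axis k 1) $ j * F j (refl v x)))) (at x)"
      apply (rule has_derivative_eq_rhs)
      apply (simp add: fun_eq_iff sum_distrib_left sum_distrib_right)
      apply (subst refl_linear_nth)
      apply (simp add: sum_distrib_right mult.assoc)
      apply (subst sum.swap) apply simp
      done
  qed
next
  case (ndiv f v)
  then obtain F where F: "\<forall>j. nice R (F j)" "\<forall>x\<in>U. (f has_derivative (\<lambda>h. \<Sum>j\<in>UNIV. h $ j * F j x)) (at x)"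
    by blast
  show ?case
  proof (rule exI[of _ "\<lambda>k x. F k x / (x \<bullet> v) - (f x * v $ k) / (x \<bullet> v) / (x \<bullet> v)"], intro conjI allI ballI)
    fix k show "nice R (\<lambda>x. F k x / (x \<bullet> v) - (f x * v $ k) / (x \<bullet> v) / (x \<bullet> v))"
      using F ndiv by (intro nice_diff nice.ndiv nice.nmul nice.nc) auto
  next
    fix x assume "x \<in> U"
    then have nz: "x \<bullet> v \<noteq> 0" using ndiv by (auto simp: regular_set_def)
    have dl: "((\<lambda>x. x \<bullet> v) has_derivative (\<lambda>h. h \<bullet> v)) (at x)"
      by (intro bounded_linear_imp_has_derivative bounded_linear_inner_left)
    show "((\<lambda>x. f x / (x \<bullet> v)) has_derivative (\<lambda>h. \<Sum>k\<in>UNIV. h $ k * (F k x / (x \<bullet> v) - (f x * v $ k) / (x \<bullet> v) / (x \<bullet> v)))) (at x)"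
      apply (rule has_derivative_eq_rhs[OF has_derivative_divide'[OF F(2)[rule_format, OF \<open>x\<in>U\<close>] dl nz]])
    proof
      fix h :: "real^'n"
      have "(\<Sum>k\<in>UNIV. h $ k * (F k x / (x \<bullet> v) - (f x * v $ k) / (x \<bullet> v) / (x \<bullet> v)))
          = (\<Sum>k\<in>UNIV. h $ k * F k x) / (x \<bullet> v) - f x * (\<Sum>k\<in>UNIV. h $ k * v $ k) / (x \<bullet> v) / (x \<bullet> v)"
        by (simp add: right_diff_distrib sum_subtractf sum_divide_distrib sum_distrib_left mult_ac)
      also have "\<dots> = ((\<Sum>k\<in>UNIV. h $ k * F k x) * (x \<bullet> v) - f x * (h \<bullet> v)) / ((x \<bullet> v) * (x \<bullet> v))"
        using nz by (simp add: inner_vec_def[of h v] field_simps)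
      finally show "((\<Sum>k\<in>UNIV. h $ k * F k x) * (x \<bullet> v) - f x * (h \<bullet> v)) / ((x \<bullet> v) * (x \<bullet> v))
         = (\<Sum>k\<in>UNIV. h $ k * (F k x / (x \<bullet> v) - (f x * v $ k) / (x \<bullet> v) / (x \<bullet> v)))" by simp
    qed
  qed
qed

end

lemma ev_line: "x \<in> S \<Longrightarrow> open S \<Longrightarrow> \<forall>\<^sub>F t in nhds 0. x + t *\<^sub>R (w::real^'n) \<in> S"
proof -
  assume a: "x \<in> S" "open S"
  have "((\<lambda>t::real. x + t *\<^sub>R w) \<longlongrightarrow> x + 0 *\<^sub>R w) (nhds 0)"
    by (intro tendsto_intros filterlim_ident) 
  then show ?thesis using topological_tendstoD a by fastforce
qed

lemma dir_deriv:
  assumes "(f has_derivative f') (at x)"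
  shows "((\<lambda>s. f (x + s *\<^sub>R w)) has_real_derivative f' w) (at 0)"
proof -
  have l: "((\<lambda>s::real. x + s *\<^sub>R w) has_derivative (\<lambda>s. s *\<^sub>R w)) (at 0)"
    by (auto intro!: derivative_eq_intros)
  have "(f \<circ> (\<lambda>s. x + s *\<^sub>R w) has_derivative f' \<circ> (\<lambda>s. s *\<^sub>R w)) (at 0)"
    by (rule diff_chain_at[OF l]) (simp add: assms)
  moreover have "f' \<circ> (\<lambda>s. s *\<^sub>R w) = (*) (f' w)"
    using linear.scaleR[OF bounded_linear.linear[OF has_derivative_bounded_linear[OF assms]]]
    by (auto simp: fun_eq_iff)
  ultimately show ?thesis by (simp add: has_field_derivative_def o_def)
qed

lemma partial_eq: "(f has_derivative f') (at x) \<Longrightarrow> partial i f x = f' (axis i 1)"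
  unfolding partial_def by (rule DERIV_imp_deriv[OF dir_deriv])

lemma sum_axis: "(\<Sum>j\<in>UNIV. axis i (1::real) $ j * c j) = c i"
proof -
  have "(\<Sum>j\<in>UNIV. axis i (1::real) $ j * c j) = (\<Sum>j\<in>UNIV. if j = i then c j else 0)"
    by (intro sum.cong) (simp_all add: axis_nth_gen)
  then show ?thesis by simp
qed

context dsetup begin

lemma nice_has_deriv: "nice R f \<Longrightarrow> x \<in> U \<Longrightarrow> (f has_derivative (\<lambda>h. \<Sum>j\<in>UNIV. h $ j * partial j f x)) (at x)"
proof -
  assume "nice R f" "x \<in> U"
  then obtain F where F: "\<forall>j. nice R (F j)" "\<forall>x\<in>U. (f has_derivative (\<lambda>h. \<Sum>j\<in>UNIV. h $ j * F j x)) (at x)"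
    using nice_deriv by blast
  have "partial j f x = F j x" for j
    using partial_eq[OF F(2)[rule_format, OF \<open>x\<in>U\<close>]] sum_axis by simp
  then show ?thesis using F(2) \<open>x\<in>U\<close> by simp
qed

lemma nice_partial: "nice R f \<Longrightarrow> \<exists>g. nice R g \<and> (\<forall>x\<in>U. partial j f x = g x)"
proof -
  assume "nice R f"
  then obtain F where F: "\<forall>j. nice R (F j)" "\<forall>x\<in>U. (f has_derivative (\<lambda>h. \<Sum>j\<in>UNIV. h $ j * F j x)) (at x)"
    using nice_deriv by blast
  have "\<forall>x\<in>U. partial j f x = F j x"
  proof
    fix x assume "x \<in> U"
    show "partial j f x = F j x"
      using partial_eq[OF F(2)[rule_format, OF \<open>x\<in>U\<close>]] sum_axis by simp
  qed
  then show ?thesis using F(1) by blast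
qed

lemma partial_cong: assumes "\<forall>y\<in>U. f y = g y" "x \<in> U" shows "partial i f x = partial i g x"
proof -
  have ev: "\<forall>\<^sub>F t in nhds 0. f (x + t *\<^sub>R axis i 1) = g (x + t *\<^sub>R axis i 1)"
    using ev_line[OF assms(2) openU, of "axis i 1"] assms(1) by (auto elim: eventually_mono)
  have "(\<lambda>D. ((\<lambda>t. f (x + t *\<^sub>R axis i 1)) has_real_derivative D) (at 0)) =
        (\<lambda>D. ((\<lambda>t. g (x + t *\<^sub>R axis i 1)) has_real_derivative D) (at 0))"
    using DERIV_cong_ev[OF refl ev refl] by (auto simp: fun_eq_iff)
  then show ?thesis by (simp add: partial_def deriv_def)
qed

definition good :: "(real^'n \<Rightarrow> real) \<Rightarrow> bool" where
  "good f \<longleftrightarrow> (\<exists>g. nice R g \<and> (\<forall>x\<in>U. f x = g x))"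

lemma nice_good: "nice R f \<Longrightarrow> good f" unfolding good_def by blast

lemma good_partial: "good f \<Longrightarrow> good (partial j f)"
proof -
  assume "good f"
  then obtain g where g: "nice R g" "\<forall>x\<in>U. f x = g x" unfolding good_def by blast
  obtain h where h: "nice R h" "\<forall>x\<in>U. partial j g x = h x" using nice_partial[OF g(1)] by blast
  have "\<forall>x\<in>U. partial j f x = h x" using partial_cong[OF g(2)] h(2) by simp
  then show ?thesis using h(1) unfolding good_def by blast
qed

lemma good_has_deriv: "good f \<Longrightarrow> x \<in> U \<Longrightarrow> \<exists>g. nice R g \<and> (\<forall>y\<in>U. f y = g y) \<and>
    (g has_derivative (\<lambda>h. \<Sum>j\<in>UNIV. h $ j * partial j f x)) (at x)"
proof -
  assume "good f" "x \<in> U"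
  then obtain g where g: "nice R g" "\<forall>x\<in>U. f x = g x" unfolding good_def by blast
  have "partial j f x = partial j g x" for j using partial_cong[OF g(2) \<open>x\<in>U\<close>] .
  then show ?thesis using g nice_has_deriv[OF g(1) \<open>x\<in>U\<close>] by auto
qed

lemma good_add: "good f \<Longrightarrow> good g \<Longrightarrow> good (\<lambda>x. f x + g x)"
proof -
  assume "good f" "good g"
  then obtain f1 g1 where "nice R f1" "\<forall>x\<in>U. f x = f1 x" "nice R g1" "\<forall>x\<in>U. g x = g1 x"
    unfolding good_def by blast
  then show ?thesis unfolding good_def by (intro exI[of _ "\<lambda>x. f1 x + g1 x"]) (auto intro: nadd)
qed
lemma good_mul: "good f \<Longrightarrow> good g \<Longrightarrow> good (\<lambda>x. f x * g x)"
proof -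
  assume "good f" "good g"
  then obtain f1 g1 where "nice R f1" "\<forall>x\<in>U. f x = f1 x" "nice R g1" "\<forall>x\<in>U. g x = g1 x"
    unfolding good_def by blast
  then show ?thesis unfolding good_def by (intro exI[of _ "\<lambda>x. f1 x * g1 x"]) (auto intro: nmul)
qed
lemma good_c: "good (\<lambda>x. c)" by (rule nice_good[OF nc])
lemma good_x: "good (\<lambda>x. x $ j)" by (rule nice_good[OF nx])
lemma good_cmul: "good f \<Longrightarrow> good (\<lambda>x. c * f x)" using good_mul[OF good_c] by blast
lemma good_diff: "good f \<Longrightarrow> good g \<Longrightarrow> good (\<lambda>x. f x - g x)"
  using good_add[OF _ good_cmul[of g "-1"]] by simp
lemma good_sum: "finite A \<Longrightarrow> (\<And>a. a \<in> A \<Longrightarrow> good (f a)) \<Longrightarrow> good (\<lambda>x. \<Sum>a\<in>A. f a x)"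
  by (induction A rule: finite_induct) (auto intro: good_c good_add)
lemma good_cong: "good f \<Longrightarrow> \<forall>x\<in>U. f x = g x \<Longrightarrow> good g"
  unfolding good_def by auto
lemma good_refl: "good f \<Longrightarrow> v \<in> R \<Longrightarrow> good (\<lambda>x. f (refl v x))"
proof -
  assume "good f" "v \<in> R"
  then obtain f1 where "nice R f1" "\<forall>x\<in>U. f x = f1 x"
    unfolding good_def by blast
  then show ?thesis unfolding good_def using refl_U \<open>v \<in> R\<close>
    by (intro exI[of _ "\<lambda>x. f1 (refl v x)"]) (auto intro: nrefl)
qed
lemma good_div: "good f \<Longrightarrow> v \<in> R \<Longrightarrow> good (\<lambda>x. f x / (x \<bullet> v))"
proof -
  assume "good f" "v \<in> R"
  then obtain f1 where "nice R f1" "\<forall>x\<in>U. f x = f1 x"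
    unfolding good_def by blast
  then show ?thesis unfolding good_def using \<open>v \<in> R\<close>
    by (intro exI[of _ "\<lambda>x. f1 x / (x \<bullet> v)"]) (auto intro: ndiv)
qed

end

locale dlap = dsetup R for R :: "(real^'n) set" +
  fixes u0 :: "real^'n" and \<kappa> :: "real^'n \<Rightarrow> real"
begin

abbreviation "P \<equiv> pos_roots R u0"
abbreviation "D \<equiv> dunkl R u0 \<kappa>"
abbreviation "Lap \<equiv> dunkl_lap R u0 \<kappa>"

lemma P_sub: "P \<subseteq> R" by (auto simp: pos_roots_def)
lemma finP: "finite P" using finR P_sub finite_subset by blast

lemma dunkl_cong: assumes "\<forall>y\<in>U. f y = g y" "x \<in> U" shows "D i f x = D i g x"
proof -
  have "v \<in> P \<Longrightarrow> f (refl v x) = g (refl v x)" for v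
    using assms refl_U P_sub by blast
  then show ?thesis using partial_cong[OF assms] assms by (simp add: dunkl_def)
qed

lemma lap_cong: assumes "\<forall>y\<in>U. f y = g y" "x \<in> U" shows "Lap f x = Lap g x"
proof -
  have "\<forall>y\<in>U. D i f y = D i g y" for i using dunkl_cong assms by blast
  then show ?thesis unfolding dunkl_lap_def using assms(2)
    by (intro sum.cong refl dunkl_cong) auto
qed

lemma good_dunkl: "good f \<Longrightarrow> good (D i f)"
proof -
  assume gf: "good f"
  have g1: "good (\<lambda>x. (\<kappa> v * v $ i) * ((f x - f (refl v x)) / (x \<bullet> v)))" if "v \<in> P" for v
    using that P_sub gf by (intro good_cmul good_div good_diff good_refl) auto
  have "good (\<lambda>x. \<kappa> v * (f x - f (refl v x)) / (x \<bullet> v) * v $ i)" if "v \<in> P" for v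
    by (rule good_cong[OF g1[OF that]]) (auto simp: field_simps)
  then have "good (\<lambda>x. partial i f x + (\<Sum>v\<in>P. \<kappa> v * (f x - f (refl v x)) / (x \<bullet> v) * v $ i))"
    using gf finP by (intro good_add good_partial good_sum) auto
  then show ?thesis by (simp add: dunkl_def[abs_def])
qed

lemma good_lap: "good f \<Longrightarrow> good (Lap f)"
  unfolding dunkl_lap_def by (intro good_sum good_dunkl) auto

lemma partial_lin: assumes "good f" "good g" "x \<in> U"
  shows "partial i (\<lambda>y. a * f y + b * g y) x = a * partial i f x + b * partial i g x"
proof -
  obtain f1 where f1: "nice R f1" "\<forall>y\<in>U. f y = f1 y" "(f1 has_derivative (\<lambda>h. \<Sum>j\<in>UNIV. h $ j * partial j f x)) (at x)"
    using good_has_deriv[OF assms(1,3)] by blast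
  obtain g1 where g1: "nice R g1" "\<forall>y\<in>U. g y = g1 y" "(g1 has_derivative (\<lambda>h. \<Sum>j\<in>UNIV. h $ j * partial j g x)) (at x)"
    using good_has_deriv[OF assms(2,3)] by blast
  have "partial i (\<lambda>y. a * f y + b * g y) x = partial i (\<lambda>y. a * f1 y + b * g1 y) x"
    using partial_cong f1 g1 assms by simp
  also have "\<dots> = a * partial i f x + b * partial i g x"
    by (subst partial_eq[OF has_derivative_add[OF has_derivative_mult_right[OF f1(3)] has_derivative_mult_right[OF g1(3)]]])
       (simp add: sum_axis)
  finally show ?thesis .
qed

lemma dunkl_lin: assumes "good f" "good g" "x \<in> U"
  shows "D i (\<lambda>y. a * f y + b * g y) x = a * D i f x + b * D i g x"
proof -
  have t: "\<kappa> v * (a * f x + b * g x - (a * f (refl v x) + b * g (refl v x))) / (x \<bullet> v) * v $ i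
     = a * (\<kappa> v * (f x - f (refl v x)) / (x \<bullet> v) * v $ i) + b * (\<kappa> v * (g x - g (refl v x)) / (x \<bullet> v) * v $ i)" for v
    by (simp add: algebra_simps add_divide_distrib diff_divide_distrib)
  show ?thesis
    unfolding dunkl_def partial_lin[OF assms] t sum.distrib sum_distrib_left[symmetric]
    by (simp add: algebra_simps)
qed

end

lemma sum_aux: "(\<Sum>i\<in>UNIV. c * ((x::real^'n) $ i * a - r $ i * b) / l * v $ i) = c / l * (a * (x \<bullet> v) - b * (r \<bullet> v))"
proof -
  have "(\<Sum>i\<in>UNIV. c * (x $ i * a - r $ i * b) / l * v $ i) = (\<Sum>i\<in>UNIV. c / l * a * (x $ i * v $ i) - c / l * b * (r $ i * v $ i))"
    by (intro sum.cong refl) (cases "l = 0"; simp add: field_simps)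
  also have "\<dots> = c / l * a * (\<Sum>i\<in>UNIV. x $ i * v $ i) - c / l * b * (\<Sum>i\<in>UNIV. r $ i * v $ i)"
    by (simp only: sum_subtractf sum_distrib_left)
  finally show ?thesis by (simp add: inner_vec_def algebra_simps)
qed

lemma sum_aux2: "(\<Sum>i\<in>UNIV. (x::real^'n) $ i * (c * v $ i)) = c * (x \<bullet> v)"
  by (simp add: inner_vec_def sum_distrib_left algebra_simps)

lemma gauss_deriv: "((\<lambda>y::real^'n. exp (-(\<omega>/2) * (norm y)^2)) has_derivative
    (\<lambda>h. - \<omega> * (x \<bullet> h) * exp (-(\<omega>/2) * (norm x)^2))) (at x)"
proof -
  have "((\<lambda>y::real^'n. y \<bullet> y) has_derivative (\<lambda>h. x \<bullet> h + h \<bullet> x)) (at x)"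
    by (rule has_derivative_inner[OF has_derivative_ident has_derivative_ident])
  then have "((\<lambda>y::real^'n. -(\<omega>/2) * (y \<bullet> y)) has_derivative (\<lambda>h. -(\<omega>/2) * (x \<bullet> h + h \<bullet> x))) (at x)"
    by (rule has_derivative_mult_right)
  then have "((\<lambda>y::real^'n. exp (-(\<omega>/2) * (y \<bullet> y))) has_derivative (\<lambda>h. -(\<omega>/2) * (x \<bullet> h + h \<bullet> x) * exp (-(\<omega>/2) * (x \<bullet> x)))) (at x)"
    by (rule has_derivative_exp)
  moreover have eq: "(\<lambda>y::real^'n. exp (-(\<omega>/2) * (norm y)^2)) = (\<lambda>y. exp (-(\<omega>/2) * (y \<bullet> y)))"
    by (simp add: power2_norm_eq_inner)
  ultimately show ?thesis
    by (subst eq, elim has_derivative_eq_rhs) (simp add: fun_eq_iff power2_norm_eq_inner inner_commute algebra_simps)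
qed

context dlap begin

definition homog :: "int \<Rightarrow> (real^'n \<Rightarrow> real) \<Rightarrow> bool" where
  "homog k f \<longleftrightarrow> (\<forall>x\<in>U. \<forall>t>0. f (t *\<^sub>R x) = t powi k * f x)"

lemma homog_cong: "homog k f \<Longrightarrow> \<forall>x\<in>U. f x = g x \<Longrightarrow> homog k g"
  unfolding homog_def using scale_U by (metis less_irrefl)

lemma homog_partial: assumes gf: "good f" and hf: "homog k f" shows "homog (k - 1) (partial i f)"
  unfolding homog_def
proof (intro ballI allI impI)
  fix x and t :: real assume x: "x \<in> U" and t: "t > 0"
  obtain f1 where f1: "nice R f1" "\<forall>y\<in>U. f y = f1 y" using gf unfolding good_def by blast
  have tx: "t *\<^sub>R x \<in> U" using scale_U x t by simp
  have h1: "homog k f1" using homog_cong[OF hf f1(2)] .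
  let ?e = "axis i (1::real) :: real^'n"
  have d1: "((\<lambda>s. f1 (t *\<^sub>R x + s *\<^sub>R ?e)) has_real_derivative partial i f1 (t *\<^sub>R x)) (at 0)"
    using dir_deriv[OF nice_has_deriv[OF f1(1) tx], of ?e] by (simp add: sum_axis)
  have se: "(\<Sum>j\<in>UNIV. ((1/t) *\<^sub>R ?e) $ j * partial j f1 x) = (1/t) * partial i f1 x"
  proof -
    have "(\<Sum>j\<in>UNIV. ((1/t) *\<^sub>R ?e) $ j * partial j f1 x) = (\<Sum>j\<in>UNIV. if j = i then (1/t) * partial j f1 x else 0)"
      by (intro sum.cong refl) (simp add: axis_nth_gen)
    then show ?thesis by simp
  qed
  have dd: "((\<lambda>s. f1 (x + s *\<^sub>R ((1/t) *\<^sub>R ?e))) has_real_derivative (1/t) * partial i f1 x) (at 0)"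
    using dir_deriv[OF nice_has_deriv[OF f1(1) x], of "(1/t) *\<^sub>R ?e"] unfolding se .
  have d2: "((\<lambda>s. t powi k * f1 (x + s *\<^sub>R ((1/t) *\<^sub>R ?e))) has_real_derivative t powi k * ((1/t) * partial i f1 x)) (at 0)"
    by (rule DERIV_cmult[OF dd])
  have ev: "\<forall>\<^sub>F s in nhds 0. t powi k * f1 (x + s *\<^sub>R ((1/t) *\<^sub>R ?e)) = f1 (t *\<^sub>R x + s *\<^sub>R ?e)"
    using ev_line[OF x openU, of "(1/t) *\<^sub>R ?e"]
  proof (rule eventually_mono)
    fix s assume "x + s *\<^sub>R ((1/t) *\<^sub>R ?e) \<in> U"
    then have "f1 (t *\<^sub>R (x + s *\<^sub>R ((1/t) *\<^sub>R ?e))) = t powi k * f1 (x + s *\<^sub>R ((1/t) *\<^sub>R ?e))"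
      using h1 t unfolding homog_def by blast
    moreover have "t *\<^sub>R (x + s *\<^sub>R ((1/t) *\<^sub>R ?e)) = t *\<^sub>R x + s *\<^sub>R ?e"
      using t by (simp add: algebra_simps)
    ultimately show "t powi k * f1 (x + s *\<^sub>R ((1/t) *\<^sub>R ?e)) = f1 (t *\<^sub>R x + s *\<^sub>R ?e)" by simp
  qed
  have "partial i f1 (t *\<^sub>R x) = t powi k * ((1/t) * partial i f1 x)"
    using DERIV_unique[OF d1 iffD1[OF DERIV_cong_ev[OF refl ev refl] d2]] .
  also have "\<dots> = t powi (k - 1) * partial i f1 x"
    using t by (simp add: power_int_diff)
  finally show "partial i f (t *\<^sub>R x) = t powi (k - 1) * partial i f x"
    using partial_cong[OF f1(2) x] partial_cong[OF f1(2) tx] by simp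
qed

lemma homog_dunkl: assumes gf: "good f" and hf: "homog k f" shows "homog (k - 1) (D i f)"
  unfolding homog_def
proof (intro ballI allI impI)
  fix x and t :: real assume x: "x \<in> U" and t: "t > 0"
  have hp: "partial i f (t *\<^sub>R x) = t powi (k - 1) * partial i f x"
    using homog_partial[OF gf hf] x t unfolding homog_def by blast
  have "\<kappa> v * (f (t *\<^sub>R x) - f (refl v (t *\<^sub>R x))) / (t *\<^sub>R x \<bullet> v) * v $ i
      = t powi (k - 1) * (\<kappa> v * (f x - f (refl v x)) / (x \<bullet> v) * v $ i)" if v: "v \<in> P" for v
  proof -
    have "refl v x \<in> U" using refl_U x v P_sub by blast
    then have "f (refl v (t *\<^sub>R x)) = t powi k * f (refl v x)"
      using hf t unfolding homog_def by (simp add: refl_scale)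
    moreover have "f (t *\<^sub>R x) = t powi k * f x" using hf t x unfolding homog_def by blast
    moreover have "t powi k = t * t powi (k - 1)" using t
      by (metis add.commute diff_add_cancel less_irrefl power_int_add_1')
    moreover have "x \<bullet> v \<noteq> 0" using x v P_sub by (auto simp: regular_set_def)
    ultimately show ?thesis using t by (simp add: field_simps)
  qed
  then show "D i f (t *\<^sub>R x) = t powi (k - 1) * D i f x"
    by (simp add: dunkl_def hp sum_distrib_left distrib_left)
qed

lemma homog_lap: assumes gf: "good f" and hf: "homog k f" shows "homog (k - 2) (Lap f)"
  unfolding homog_def
proof (intro ballI allI impI)
  fix x and t :: real assume x: "x \<in> U" and t: "t > 0"
  have "homog (k - 1 - 1) (D i (D i f))" for i
    by (intro homog_dunkl good_dunkl gf hf)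
  then have "D i (D i f) (t *\<^sub>R x) = t powi (k - 2) * D i (D i f) x" for i
    using x t unfolding homog_def by (simp add: algebra_simps)
  then show "Lap f (t *\<^sub>R x) = t powi (k - 2) * Lap f x"
    by (simp add: dunkl_lap_def sum_distrib_left)
qed

end

abbreviation gau :: "real \<Rightarrow> real^'n \<Rightarrow> real" where
  "gau \<omega> y \<equiv> exp (-(\<omega>/2) * (norm y)^2)"

lemma sum_lin4: "(\<Sum>i\<in>A. (G::real) * (a i - w * b i - w * c i + z * d i * q)) = G * (sum a A - w * sum b A - w * sum c A + z * sum d A * q)"
proof -
  have "(\<Sum>i\<in>A. G * (a i - w * b i - w * c i + z * d i * q)) = (\<Sum>i\<in>A. G * a i - (G * w) * b i - (G * w) * c i + (G * z * q) * d i)"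
    by (intro sum.cong refl) (simp add: algebra_simps)
  also have "\<dots> = G * sum a A - (G * w) * sum b A - (G * w) * sum c A + (G * z * q) * sum d A"
    by (simp add: sum.distrib sum_subtractf sum_distrib_left)
  finally show ?thesis by (simp add: algebra_simps)
qed
context dlap begin

lemma GD: assumes gh: "good h" and x: "x \<in> U"
  shows "D i (\<lambda>y. h y * gau \<omega> y) x = gau \<omega> x * (D i h x - \<omega> * x $ i * h x)"
proof -
  obtain h1 where h1: "nice R h1" "\<forall>y\<in>U. h y = h1 y" using gh unfolding good_def by blast
  have pc: "partial j h1 x = partial j h x" for j using partial_cong[OF h1(2) x] by simp
  have "partial i (\<lambda>y. h y * gau \<omega> y) x = partial i (\<lambda>y. h1 y * gau \<omega> y) x"
    using h1(2) x by (intro partial_cong) auto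
  also have "\<dots> = h1 x * (- \<omega> * (x \<bullet> axis i 1) * gau \<omega> x) + (\<Sum>j\<in>UNIV. axis i 1 $ j * partial j h1 x) * gau \<omega> x"
    by (rule partial_eq[OF has_derivative_mult[OF nice_has_deriv[OF h1(1) x] gauss_deriv]])
  also have "\<dots> = h x * (- \<omega> * x $ i * gau \<omega> x) + partial i h x * gau \<omega> x"
    using h1(2) x by (simp add: sum_axis pc inner_axis)
  finally have p: "partial i (\<lambda>y. h y * gau \<omega> y) x = h x * (- \<omega> * x $ i * gau \<omega> x) + partial i h x * gau \<omega> x" .
  have sf: "(\<Sum>v\<in>P. \<kappa> v * (h x * gau \<omega> x - h (refl v x) * gau \<omega> (refl v x)) / (x \<bullet> v) * v $ i)
     = gau \<omega> x * (\<Sum>v\<in>P. \<kappa> v * (h x - h (refl v x)) / (x \<bullet> v) * v $ i)"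
    unfolding sum_distrib_left using x P_sub
    by (intro sum.cong refl) (auto simp: refl_norm field_simps regular_set_def)
  show ?thesis
    unfolding dunkl_def p sf by (simp add: algebra_simps)
qed

lemma D_xp: assumes gp: "good p" and x: "x \<in> U"
  shows "D i (\<lambda>y. y $ i * p y) x = p x + x $ i * partial i p x
      + (\<Sum>v\<in>P. \<kappa> v * (x $ i * p x - refl v x $ i * p (refl v x)) / (x \<bullet> v) * v $ i)"
proof -
  obtain p1 where p1: "nice R p1" "\<forall>y\<in>U. p y = p1 y" using gp unfolding good_def by blast
  have pc: "partial j p1 x = partial j p x" for j using partial_cong[OF p1(2) x] by simp
  have "partial i (\<lambda>y. y $ i * p y) x = partial i (\<lambda>y. y $ i * p1 y) x"
    using p1(2) x by (intro partial_cong) auto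
  also have "\<dots> = x $ i * (\<Sum>j\<in>UNIV. axis i 1 $ j * partial j p1 x) + axis i 1 $ i * p1 x"
    by (rule partial_eq[OF has_derivative_mult[OF bounded_linear_imp_has_derivative[OF bounded_linear_vec_nth] nice_has_deriv[OF p1(1) x]]])
  also have "\<dots> = x $ i * partial i p x + p x"
    using p1(2) x by (simp add: sum_axis pc)
  finally show ?thesis by (simp add: dunkl_def)
qed

lemma lapG: assumes gp: "good p" and x: "x \<in> U"
  shows "Lap (\<lambda>y. p y * gau \<omega> y) x = gau \<omega> x * (Lap p x
      - \<omega> * (real CARD('n) + 2 * gamma_k R u0 \<kappa>) * p x
      - 2 * \<omega> * (\<Sum>j\<in>UNIV. x $ j * partial j p x) + \<omega>^2 * (x \<bullet> x) * p x)"
proof -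
  define h where "h i y = D i p y - \<omega> * y $ i * p y" for i y
  have gxp: "good (\<lambda>y. y $ i * p y)" for i by (intro good_mul good_x gp)
  have gh: "good (h i)" for i unfolding h_def
    by (intro good_diff good_dunkl gp good_mul good_c good_x)
  have hform: "h i = (\<lambda>y. 1 * D i p y + (- \<omega>) * (y $ i * p y))" for i
    by (simp add: h_def fun_eq_iff)
  have a: "\<forall>y\<in>U. D i (\<lambda>y. p y * gau \<omega> y) y = h i y * gau \<omega> y" for i
    using GD[OF gp] by (simp add: h_def)
  have b: "D i (D i (\<lambda>y. p y * gau \<omega> y)) x = gau \<omega> x * (D i (h i) x - \<omega> * x $ i * h i x)" for i
    using dunkl_cong[OF a x] GD[OF gh x] by simp
  have c0: "D i (h i) x = 1 * D i (D i p) x + (- \<omega>) * D i (\<lambda>y. y $ i * p y) x" for i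
    unfolding hform by (rule dunkl_lin[OF good_dunkl[OF gp] gxp x])
  have c: "D i (h i) x = D i (D i p) x - \<omega> * D i (\<lambda>y. y $ i * p y) x" for i
    using c0[of i] by simp
  let ?E = "\<Sum>j\<in>UNIV. x $ j * partial j p x"
  let ?g = "gamma_k R u0 \<kappa>"
  have lx: "v \<in> P \<Longrightarrow> x \<bullet> v \<noteq> 0" for v using x P_sub by (auto simp: regular_set_def)
  have s1: "(\<Sum>i\<in>UNIV. D i (\<lambda>y. y $ i * p y) x) = real CARD('n) * p x + ?E + (\<Sum>v\<in>P. \<kappa> v * (p x + p (refl v x)))"
  proof -
    have "(\<Sum>i\<in>UNIV. D i (\<lambda>y. y $ i * p y) x) = (\<Sum>i\<in>(UNIV::'n set). p x) + ?E
       + (\<Sum>i\<in>UNIV. \<Sum>v\<in>P. \<kappa> v * (x $ i * p x - refl v x $ i * p (refl v x)) / (x \<bullet> v) * v $ i)"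
      by (simp add: D_xp[OF gp x] sum.distrib)
    also have "(\<Sum>i\<in>UNIV. \<Sum>v\<in>P. \<kappa> v * (x $ i * p x - refl v x $ i * p (refl v x)) / (x \<bullet> v) * v $ i)
        = (\<Sum>v\<in>P. \<kappa> v * (p x + p (refl v x)))"
      apply (subst sum.swap)
      apply (intro sum.cong refl)
      apply (subst sum_aux)
      apply (simp add: refl_self lx field_simps)
      done
    finally show ?thesis by simp
  qed
  have s2: "(\<Sum>i\<in>UNIV. x $ i * D i p x) = ?E + (\<Sum>v\<in>P. \<kappa> v * (p x - p (refl v x)))"
  proof -
    have "(\<Sum>i\<in>UNIV. x $ i * D i p x) = ?E + (\<Sum>i\<in>UNIV. \<Sum>v\<in>P. x $ i * (\<kappa> v * (p x - p (refl v x)) / (x \<bullet> v) * v $ i))"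
      by (simp add: dunkl_def distrib_left sum.distrib sum_distrib_left)
    also have "(\<Sum>i\<in>UNIV. \<Sum>v\<in>P. x $ i * (\<kappa> v * (p x - p (refl v x)) / (x \<bullet> v) * v $ i)) = (\<Sum>v\<in>P. \<kappa> v * (p x - p (refl v x)))"
      apply (subst sum.swap)
      apply (intro sum.cong refl)
      apply (subst sum_aux2)
      apply (simp add: lx)
      done
    finally show ?thesis .
  qed
  have s3: "(\<Sum>i\<in>UNIV. x $ i * x $ i) = x \<bullet> x" by (simp add: inner_vec_def)
  have "Lap (\<lambda>y. p y * gau \<omega> y) x = (\<Sum>i\<in>UNIV. gau \<omega> x * (D i (D i p) x - \<omega> * D i (\<lambda>y. y $ i * p y) x
        - \<omega> * (x $ i * D i p x) + \<omega>^2 * (x $ i * x $ i) * p x))"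
    unfolding dunkl_lap_def b c by (intro sum.cong refl) (simp add: h_def algebra_simps power2_eq_square)
  also have "\<dots> = gau \<omega> x * (Lap p x - \<omega> * (\<Sum>i\<in>UNIV. D i (\<lambda>y. y $ i * p y) x)
        - \<omega> * (\<Sum>i\<in>UNIV. x $ i * D i p x) + \<omega>^2 * (\<Sum>i\<in>UNIV. x $ i * x $ i) * p x)"
    unfolding sum_lin4 dunkl_lap_def ..
  also have "\<dots> = gau \<omega> x * (Lap p x
      - \<omega> * (real CARD('n) + 2 * ?g) * p x - 2 * \<omega> * ?E + \<omega>^2 * (x \<bullet> x) * p x)"
    unfolding s1 s2 s3 gamma_k_def
    by (simp add: algebra_simps sum.distrib sum_subtractf sum_distrib_left sum_distrib_right)
  finally show ?thesis .
qed

end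

lemma digits_inj:
  fixes B :: nat
  shows "(\<forall>k<N. d k < B) \<Longrightarrow> (\<forall>k<N. e k < B) \<Longrightarrow> (\<Sum>k<N. d k * B^k) = (\<Sum>k<N. e k * B^k) \<Longrightarrow> \<forall>k<N. d k = e k"
proof (induction N arbitrary: d e)
  case 0 then show ?case by simp
next
  case (Suc N)
  have sp: "(\<Sum>k<Suc N. f k * B^k) = f 0 + B * (\<Sum>k<N. f (Suc k) * B^k)" for f :: "nat \<Rightarrow> nat"
    by (subst sum.lessThan_Suc_shift) (simp add: sum_distrib_left mult_ac)
  have d0: "d 0 < B" "e 0 < B" using Suc.prems by auto
  have eq: "d 0 + B * (\<Sum>k<N. d (Suc k) * B^k) = e 0 + B * (\<Sum>k<N. e (Suc k) * B^k)"
    using Suc.prems(3) unfolding sp .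
  then have "(d 0 + B * (\<Sum>k<N. d (Suc k) * B^k)) mod B = (e 0 + B * (\<Sum>k<N. e (Suc k) * B^k)) mod B" by simp
  then have e0: "d 0 = e 0" using d0 by simp
  then have "B * (\<Sum>k<N. d (Suc k) * B^k) = B * (\<Sum>k<N. e (Suc k) * B^k)" using eq by simp
  then have "(\<Sum>k<N. d (Suc k) * B^k) = (\<Sum>k<N. e (Suc k) * B^k)" using d0 by simp
  moreover have "\<forall>k<N. d (Suc k) < B" "\<forall>k<N. e (Suc k) < B" using Suc.prems by auto
  ultimately have "\<forall>k<N. d (Suc k) = e (Suc k)"
    using Suc.IH[of "\<lambda>k. d (Suc k)" "\<lambda>k. e (Suc k)"] by blast
  then show ?case using e0 by (auto simp: less_Suc_eq_0_disj)
qed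

lemma enc_inj:
  fixes \<iota> :: "'n::finite \<Rightarrow> nat" and B :: nat
  assumes bij: "bij_betw \<iota> UNIV {0..<CARD('n)}"
    and a: "\<forall>i. \<alpha> i < B" and b: "\<forall>i. \<beta> i < B"
    and eq: "(\<Sum>i\<in>UNIV. B ^ \<iota> i * \<alpha> i) = (\<Sum>i\<in>UNIV. B ^ \<iota> i * \<beta> i)"
  shows "\<alpha> = \<beta>"
proof -
  let ?j = "inv_into UNIV \<iota>"
  have inj: "inj \<iota>" using bij bij_betw_imp_inj_on by blast
  have r: "(\<Sum>i\<in>UNIV. B ^ \<iota> i * \<gamma> i) = (\<Sum>k<CARD('n). \<gamma> (?j k) * B ^ k)" for \<gamma> :: "'n \<Rightarrow> nat"
  proof -
    have "(\<Sum>k<CARD('n). \<gamma> (?j k) * B ^ k) = (\<Sum>i\<in>UNIV. \<gamma> (?j (\<iota> i)) * B ^ \<iota> i)"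
      using sum.reindex_bij_betw[OF bij, of "\<lambda>k. \<gamma> (?j k) * B ^ k"] by (simp add: atLeast0LessThan)
    also have "\<dots> = (\<Sum>i\<in>UNIV. B ^ \<iota> i * \<gamma> i)" using inj by (simp add: inv_into_f_f mult.commute)
    finally show ?thesis by simp
  qed
  have A: "\<forall>k<CARD('n). \<alpha> (?j k) = \<beta> (?j k)"
    by (rule digits_inj) (use a b eq r in auto)
  have lt: "\<iota> i < CARD('n)" for i using bij by (auto simp: bij_betw_def)
  have "\<alpha> i = \<beta> i" for i using A[rule_format, OF lt[of i]] by (simp add: inv_f_f[OF inj])
  then show ?thesis by auto
qed

lemma peval_sub: "finite A \<Longrightarrow> {\<alpha>. c \<alpha> \<noteq> 0} \<subseteq> A \<Longrightarrow> peval c x = (\<Sum>\<alpha>\<in>A. c \<alpha> * Defs.mono \<alpha> x)"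
  unfolding peval_def by (rule sum.mono_neutral_left) auto

lemma mono_scale: "Defs.mono \<alpha> (t *\<^sub>R x) = t ^ mdeg \<alpha> * Defs.mono \<alpha> x"
  by (simp add: Defs.mono_def mdeg_def power_mult_distrib prod.distrib power_sum)

lemma nice_pow: "nice R f \<Longrightarrow> nice R (\<lambda>x. f x ^ m)"
  by (induction m) (auto intro: nc nmul)

lemma nice_prod: "finite A \<Longrightarrow> (\<And>a. a \<in> A \<Longrightarrow> nice R (f a)) \<Longrightarrow> nice R (\<lambda>x. \<Prod>a\<in>A. f a x)"
  by (induction A rule: finite_induct) (auto intro: nc nmul)

lemma nice_mono: "nice R (Defs.mono \<alpha>)"
  unfolding Defs.mono_def[abs_def] by (intro nice_prod nice_pow nx) auto

lemma nice_peval: "is_poly c \<Longrightarrow> nice R (peval c)"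
  unfolding peval_def[abs_def] is_poly_def by (intro nice_sum nice_cmul nice_mono) auto

lemma is_poly_hom: "is_poly c \<Longrightarrow> is_poly (hom_part k c)"
  unfolding is_poly_def hom_part_def by (rule finite_subset[rotated]) auto

lemma peval_hom_scale: "is_poly c \<Longrightarrow> peval (hom_part k c) (t *\<^sub>R x) = t ^ k * peval (hom_part k c) x"
proof -
  assume "is_poly c"
  then have f: "finite {\<alpha>. hom_part k c \<alpha> \<noteq> 0}" using is_poly_hom is_poly_def by blast
  have "peval (hom_part k c) (t *\<^sub>R x) = (\<Sum>\<alpha>\<in>{\<alpha>. hom_part k c \<alpha> \<noteq> 0}. hom_part k c \<alpha> * (t ^ mdeg \<alpha> * Defs.mono \<alpha> x))"
    by (simp add: peval_def mono_scale)
  also have "\<dots> = (\<Sum>\<alpha>\<in>{\<alpha>. hom_part k c \<alpha> \<noteq> 0}. t ^ k * (hom_part k c \<alpha> * Defs.mono \<alpha> x))"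
    by (intro sum.cong refl) (auto simp: hom_part_def split: if_splits)
  finally show ?thesis by (simp add: peval_def sum_distrib_left)
qed

lemma hom_part_high: "deg_le n p \<Longrightarrow> n < k \<Longrightarrow> hom_part k p = (\<lambda>_. 0)"
  unfolding deg_le_def hom_part_def by (auto simp: fun_eq_iff)

lemma peval_zero: "peval (\<lambda>_. 0) x = 0" by (simp add: peval_def)

lemma peval_decomp: assumes "is_poly p" "deg_le n p" "n \<le> m"
  shows "peval p x = (\<Sum>k\<le>m. peval (hom_part k p) x)"
proof -
  let ?S = "{\<alpha>. p \<alpha> \<noteq> 0}"
  have f: "finite ?S" using assms(1) is_poly_def by blast
  have "peval (hom_part k p) x = (\<Sum>\<alpha>\<in>?S. (if mdeg \<alpha> = k then p \<alpha> * Defs.mono \<alpha> x else 0))" for k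
    by (subst peval_sub[OF f]) (auto simp: hom_part_def intro!: sum.cong)
  then have "(\<Sum>k\<le>m. peval (hom_part k p) x) = (\<Sum>k\<le>m. \<Sum>\<alpha>\<in>?S. (if mdeg \<alpha> = k then p \<alpha> * Defs.mono \<alpha> x else 0))"
    by (simp only:)
  also have "\<dots> = (\<Sum>\<alpha>\<in>?S. \<Sum>k\<le>m. (if mdeg \<alpha> = k then p \<alpha> * Defs.mono \<alpha> x else 0))"
    by (rule sum.swap)
  also have "\<dots> = (\<Sum>\<alpha>\<in>?S. p \<alpha> * Defs.mono \<alpha> x)"
    using assms(2,3) by (intro sum.cong refl) (auto simp: deg_le_def)
  finally show ?thesis by (simp add: peval_def)
qed

context dsetup begin

lemma poly_ident: assumes cp: "is_poly c" and z: "\<forall>x\<in>U. peval c x = 0"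
  shows "c = (\<lambda>_. 0)"
proof (rule ccontr)
  assume nz: "c \<noteq> (\<lambda>_. 0)"
  let ?S = "{\<alpha>. c \<alpha> \<noteq> 0}"
  have fS: "finite ?S" using cp is_poly_def by blast
  define B where "B = 2 + (\<Sum>\<alpha>\<in>?S. mdeg \<alpha>)"
  have B2: "B \<ge> 2" by (simp add: B_def)
  have bnd: "\<alpha> i < B" if "\<alpha> \<in> ?S" for \<alpha> i
  proof -
    have "\<alpha> i \<le> mdeg \<alpha>" unfolding mdeg_def by (rule member_le_sum) auto
    also have "\<dots> \<le> (\<Sum>\<alpha>\<in>?S. mdeg \<alpha>)" using that fS by (intro member_le_sum) auto
    finally show ?thesis by (simp add: B_def)
  qed
  obtain \<iota> :: "'n \<Rightarrow> nat" where bij: "bij_betw \<iota> UNIV {0..<CARD('n)}"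
    using ex_bij_betw_finite_nat[of "UNIV :: 'n set"] by auto
  have injiota: "inj \<iota>" using bij bij_betw_imp_inj_on by blast
  define w where "w i = B ^ \<iota> i" for i
  have winj: "w i = w j \<Longrightarrow> i = j" for i j
    using B2 injiota by (auto simp: w_def power_inject_exp inj_def)
  define enc where "enc \<alpha> = (\<Sum>i\<in>UNIV. w i * \<alpha> i)" for \<alpha> :: "'n \<Rightarrow> nat"
  have encinj: "\<alpha> \<in> ?S \<Longrightarrow> \<beta> \<in> ?S \<Longrightarrow> enc \<alpha> = enc \<beta> \<Longrightarrow> \<alpha> = \<beta>" for \<alpha> \<beta>
    using enc_inj[OF bij, of \<alpha> B \<beta>] bnd by (auto simp: enc_def w_def)
  define \<gamma> :: "real \<Rightarrow> real^'n" where "\<gamma> t = (\<chi> i. t ^ w i)" for t :: real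
  have mono_\<gamma>: "Defs.mono \<alpha> (\<gamma> t) = t ^ enc \<alpha>" for \<alpha> t
    by (simp add: Defs.mono_def \<gamma>_def enc_def power_mult power_sum)
  define Q where "Q = (\<Sum>\<alpha>\<in>?S. monom (c \<alpha>) (enc \<alpha>))"
  have pQ: "peval c (\<gamma> t) = poly Q t" for t
    by (simp add: Q_def peval_def poly_sum poly_monom mono_\<gamma>)
  have cQ: "coeff Q (enc \<beta>) = c \<beta>" if "\<beta> \<in> ?S" for \<beta>
  proof -
    have "coeff Q (enc \<beta>) = (\<Sum>\<alpha>\<in>?S. if \<alpha> = \<beta> then c \<alpha> else 0)"
      unfolding Q_def coeff_sum coeff_monom using encinj that by (intro sum.cong refl) auto
    then show ?thesis using that fS by simp
  qed
  obtain \<beta> where \<beta>: "\<beta> \<in> ?S" using nz by auto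
  have Qnz: "Q \<noteq> 0" using cQ[OF \<beta>] \<beta> by auto
  define V where "V v = (\<Sum>i\<in>UNIV. monom (v $ i) (w i))" for v :: "real^'n"
  have pV: "\<gamma> t \<bullet> v = poly (V v) t" for v t
    by (simp add: V_def inner_vec_def \<gamma>_def poly_sum poly_monom mult.commute)
  have Vnz: "V v \<noteq> 0" if "v \<in> R" for v
  proof -
    from that zR have "v \<noteq> 0" by auto
    then obtain j where j: "v $ j \<noteq> 0" by (auto simp: vec_eq_iff)
    have "coeff (V v) (w j) = (\<Sum>i\<in>UNIV. if i = j then v $ i else 0)"
      unfolding V_def coeff_sum coeff_monom using winj by (intro sum.cong refl) auto
    then have "coeff (V v) (w j) = v $ j" by simp
    then show ?thesis using j by auto
  qed
  define bad where "bad = (\<Union>v\<in>R. {t. poly (V v) t = 0})"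
  have fbad: "finite bad" unfolding bad_def using finR Vnz poly_roots_finite by blast
  have "t \<notin> bad \<Longrightarrow> \<gamma> t \<in> U" for t
    by (auto simp: bad_def regular_set_def pV)
  then have "UNIV - bad \<subseteq> {t. poly Q t = 0}" using z pQ by (metis (mono_tags, lifting) Diff_iff mem_Collect_eq subsetI)
  moreover have "infinite (UNIV - bad :: real set)"
    using fbad infinite_UNIV_char_0 Diff_infinite_finite by blast
  ultimately have "infinite {t. poly Q t = 0}" using finite_subset by blast
  then show False using poly_roots_finite Qnz by blast
qed

end

lemma shift2: "(\<Sum>m\<le>(M::nat)+2. (if 2 \<le> m then h (m - 2) else (0::real))) = (\<Sum>k\<le>M. h k)"
proof -
  have "(\<Sum>m\<le>Suc (Suc M). (if 2 \<le> m then h (m - 2) else (0::real))) = (\<Sum>k\<le>M. h k)"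
    by (simp only: sum.atMost_Suc_shift) simp
  then show ?thesis by (simp add: numeral_2_eq_2)
qed

context dlap begin

lemma D_zeroU: assumes "\<forall>y\<in>U. f y = 0" "x \<in> U" shows "D i f x = 0"
proof -
  have "D i f x = D i (\<lambda>y. 0) x" using dunkl_cong[of f "\<lambda>y. 0" x i] assms by simp
  also have "\<dots> = 0"
    unfolding dunkl_def using partial_eq[OF has_derivative_const[of "0::real" "at x"], of i] by simp
  finally show ?thesis .
qed

lemma Lap_zeroU: assumes "\<forall>y\<in>U. f y = 0" "x \<in> U" shows "Lap f x = 0"
proof -
  have "\<forall>y\<in>U. D i f y = 0" for i using D_zeroU assms(1) by blast
  then show ?thesis unfolding dunkl_lap_def using D_zeroU assms(2) by simp
qed

lemma dunkl_sum: "finite A \<Longrightarrow> (\<And>a. a \<in> A \<Longrightarrow> good (f a)) \<Longrightarrow> x \<in> U \<Longrightarrow>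
   D i (\<lambda>y. \<Sum>a\<in>A. f a y) x = (\<Sum>a\<in>A. D i (f a) x)"
proof (induction A rule: finite_induct)
  case empty then show ?case using D_zeroU by simp
next
  case (insert a A)
  have g: "good (\<lambda>y. \<Sum>a\<in>A. f a y)" using insert by (intro good_sum) auto
  have "D i (\<lambda>y. \<Sum>a\<in>insert a A. f a y) x = D i (\<lambda>y. 1 * f a y + 1 * (\<Sum>a\<in>A. f a y)) x"
    using insert by simp
  also have "\<dots> = 1 * D i (f a) x + 1 * D i (\<lambda>y. \<Sum>a\<in>A. f a y) x"
    using insert g by (intro dunkl_lin) auto
  finally show ?case using insert by simp
qed

lemma lap_sum: assumes "finite A" "\<And>a. a \<in> A \<Longrightarrow> good (f a)" "x \<in> U"
  shows "Lap (\<lambda>y. \<Sum>a\<in>A. f a y) x = (\<Sum>a\<in>A. Lap (f a) x)"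
proof -
  have "D i (D i (\<lambda>y. \<Sum>a\<in>A. f a y)) x = D i (\<lambda>y. \<Sum>a\<in>A. D i (f a) y) x" for i
    using dunkl_sum[OF assms(1,2)] assms(3) by (intro dunkl_cong) auto
  also have "\<dots> i = (\<Sum>a\<in>A. D i (D i (f a)) x)" for i
    using assms by (intro dunkl_sum good_dunkl) auto
  finally have e: "D i (D i (\<lambda>y. \<Sum>a\<in>A. f a y)) x = (\<Sum>a\<in>A. D i (D i (f a)) x)" for i .
  have "Lap (\<lambda>y. \<Sum>a\<in>A. f a y) x = (\<Sum>i\<in>UNIV. \<Sum>a\<in>A. D i (D i (f a)) x)"
    unfolding dunkl_lap_def e ..
  also have "\<dots> = (\<Sum>a\<in>A. \<Sum>i\<in>UNIV. D i (D i (f a)) x)" by (rule sum.swap)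
  finally show ?thesis unfolding dunkl_lap_def .
qed

lemma dunkl_scal: "good f \<Longrightarrow> x \<in> U \<Longrightarrow> D i (\<lambda>y. a * f y) x = a * D i f x"
  using dunkl_lin[of f f x i a 0] by simp

lemma lap_scal: assumes "good f" "x \<in> U" shows "Lap (\<lambda>y. a * f y) x = a * Lap f x"
proof -
  have "D i (D i (\<lambda>y. a * f y)) x = D i (\<lambda>y. a * D i f y) x" for i
    using dunkl_scal assms by (intro dunkl_cong) auto
  also have "\<dots> i = a * D i (D i f) x" for i
    using assms by (intro dunkl_scal good_dunkl) auto
  finally show ?thesis unfolding dunkl_lap_def by (simp add: sum_distrib_left)
qed

lemma good_L: "good f \<Longrightarrow> good (\<lambda>y. - Lap f y / (4 * \<omega>))"
proof -
  assume "good f"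
  then have "good (\<lambda>y. (- 1 / (4 * \<omega>)) * Lap f y)" by (intro good_cmul good_lap)
  then show ?thesis by (rule good_cong) auto
qed

lemma good_Lpow: "good f \<Longrightarrow> good (((\<lambda>f y. - Lap f y / (4 * \<omega>)) ^^ i) f)"
proof (induction i)
  case 0 then show ?case by simp
next
  case (Suc i)
  have "good (\<lambda>y. - Lap (((\<lambda>f y. - Lap f y / (4 * \<omega>)) ^^ i) f) y / (4 * \<omega>))"
    by (rule good_L[OF Suc.IH[OF Suc.prems]])
  then show ?case by simp
qed

lemma Lpow_zero: assumes "\<forall>y\<in>U. f y = 0" shows "\<forall>y\<in>U. (((\<lambda>f y. - Lap f y / (4 * \<omega>)) ^^ i) f) y = 0"
proof (induction i)
  case 0 then show ?case using assms by simp
next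
  case (Suc i) then show ?case using Lap_zeroU by simp
qed

lemma euler: assumes pp: "is_poly p" and pd: "deg_le n p" and x: "x \<in> U"
  shows "(\<Sum>j\<in>UNIV. x $ j * partial j (peval p) x) = (\<Sum>k\<le>n. real k * peval (hom_part k p) x)"
proof -
  have d1: "((\<lambda>s. peval p (x + s *\<^sub>R x)) has_real_derivative (\<Sum>j\<in>UNIV. x $ j * partial j (peval p) x)) (at 0)"
    using dir_deriv[OF nice_has_deriv[OF nice_peval[OF pp] x], of x] .
  have eq: "peval p (x + s *\<^sub>R x) = (\<Sum>k\<le>n. (1 + s) ^ k * peval (hom_part k p) x)" for s
  proof -
    have "x + s *\<^sub>R x = (1 + s) *\<^sub>R x" by (simp add: algebra_simps)
    then show ?thesis using peval_decomp[OF pp pd order_refl] peval_hom_scale[OF pp] by simp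
  qed
  have d2: "((\<lambda>s. \<Sum>k\<le>n. (1 + s) ^ k * peval (hom_part k p) x) has_real_derivative (\<Sum>k\<le>n. real k * peval (hom_part k p) x)) (at 0)"
    by (auto intro!: derivative_eq_intros)
  show ?thesis using DERIV_unique[OF d1 d2[folded eq]] .
qed

end

lemma sum_if_le: "(\<Sum>m\<le>(n::nat)+2. if m \<le> n then f m else (0::real)) = (\<Sum>m\<le>n. f m)"
proof -
  have "(\<Sum>m\<le>n+2. if m \<le> n then f m else (0::real)) = sum f ({..n+2} \<inter> {m. m \<le> n}) + sum (\<lambda>_. 0) ({..n+2} \<inter> - {m. m \<le> n})"
    by (rule sum.If_cases) simp
  also have "{..n+2} \<inter> {m. m \<le> n} = {..n}" by auto
  finally show ?thesis by simp
qed

context dlap begin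

lemma main_part1:
  fixes \<omega> E :: real and n :: nat and p :: "('n \<Rightarrow> nat) \<Rightarrow> real"
  assumes omega: "\<omega> > 0" and pp: "is_poly p" and pd: "deg_le n p"
    and eig: "\<forall>x\<in>regular_set R.
       \<omega>^2 * (norm x)^2 * (peval p x * exp (-(\<omega>/2) * (norm x)^2))
       - dunkl_lap R u0 \<kappa> (\<lambda>y. peval p y * exp (-(\<omega>/2) * (norm y)^2)) x
       = E * (peval p x * exp (-(\<omega>/2) * (norm x)^2))"
  shows "\<forall>x\<in>U. (\<Sum>k\<le>n. (\<omega> * (real CARD('n) + 2 * gamma_k R u0 \<kappa>) + 2 * \<omega> * real k - E) * peval (hom_part k p) x
              - Lap (peval (hom_part k p)) x) = 0"
proof
  fix x assume x: "x \<in> U"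
  define pk where "pk k = peval (hom_part k p)" for k
  let ?A = "\<omega> * (real CARD('n) + 2 * gamma_k R u0 \<kappa>)"
  have gp: "good (peval p)" by (rule nice_good[OF nice_peval[OF pp]])
  have gpk: "good (pk k)" for k unfolding pk_def by (rule nice_good[OF nice_peval[OF is_poly_hom[OF pp]]])
  have pdec: "peval p = (\<lambda>y. \<Sum>k\<le>n. pk k y)"
    using peval_decomp[OF pp pd order_refl] by (simp add: pk_def fun_eq_iff)
  have G: "gau \<omega> x > 0" by simp
  have e1: "\<omega>^2 * (x \<bullet> x) * (peval p x * gau \<omega> x) - gau \<omega> x * (Lap (peval p) x
      - ?A * peval p x - 2 * \<omega> * (\<Sum>j\<in>UNIV. x $ j * partial j (peval p) x) + \<omega>^2 * (x \<bullet> x) * peval p x)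
      = E * (peval p x * gau \<omega> x)"
    using eig[rule_format, OF x] lapG[OF gp x, of \<omega>] by (simp add: power2_norm_eq_inner)
  then have "gau \<omega> x * (?A * peval p x + 2 * \<omega> * (\<Sum>j\<in>UNIV. x $ j * partial j (peval p) x) - E * peval p x - Lap (peval p) x) = 0"
    by (simp add: algebra_simps)
  then have e2: "?A * peval p x + 2 * \<omega> * (\<Sum>j\<in>UNIV. x $ j * partial j (peval p) x) - E * peval p x - Lap (peval p) x = 0"
    using G by simp
  have lp: "Lap (peval p) x = (\<Sum>k\<le>n. Lap (pk k) x)"
    unfolding pdec using gpk x by (intro lap_sum) auto
  have eu: "(\<Sum>j\<in>UNIV. x $ j * partial j (peval p) x) = (\<Sum>k\<le>n. real k * pk k x)"
    unfolding pk_def by (rule euler[OF pp pd x])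
  have pv: "peval p x = (\<Sum>k\<le>n. pk k x)" using pdec by simp
  have "(\<Sum>k\<le>n. (?A + 2 * \<omega> * real k - E) * pk k x - Lap (pk k) x)
      = (\<Sum>k\<le>n. ?A * pk k x + 2 * \<omega> * (real k * pk k x) - E * pk k x - Lap (pk k) x)"
    by (intro sum.cong refl) (simp add: algebra_simps)
  also have "\<dots> = ?A * (\<Sum>k\<le>n. pk k x) + 2 * \<omega> * (\<Sum>k\<le>n. real k * pk k x) - E * (\<Sum>k\<le>n. pk k x) - (\<Sum>k\<le>n. Lap (pk k) x)"
    by (simp add: sum_subtractf sum.distrib sum_distrib_left)
  also have "\<dots> = 0" using e2 unfolding lp eu pv .
  finally show "(\<Sum>k\<le>n. (?A + 2 * \<omega> * real k - E) * peval (hom_part k p) x - Lap (peval (hom_part k p)) x) = 0"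
    by (simp add: pk_def)
qed

lemma separation:
  fixes f :: "nat \<Rightarrow> real^'n \<Rightarrow> real" and c :: "nat \<Rightarrow> real"
  assumes gf: "\<And>k. good (f k)" and hf: "\<And>k. homog (int k) (f k)"
    and key: "\<forall>x\<in>U. (\<Sum>k\<le>n. c k * f k x - Lap (f k) x) = 0" and x: "x \<in> U"
  shows "\<forall>m\<le>n+2. (if 2 \<le> m then c (m-2) * f (m-2) x else 0) - (if m \<le> n then Lap (f m) x else 0) = 0"
proof -
  define a where "a m = (if 2 \<le> m then c (m-2) * f (m-2) x else 0) - (if m \<le> n then Lap (f m) x else 0)" for m
  have z: "(\<Sum>m\<le>n+2. a m * t^m) = 0" if t: "t > 0" for t :: real
  proof -
    have tx: "t *\<^sub>R x \<in> U" using scale_U x t by simp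
    have fk: "f k (t *\<^sub>R x) = t ^ k * f k x" for k
      using hf[of k] x t unfolding homog_def by simp
    have lk: "Lap (f k) (t *\<^sub>R x) = t powi (int k - 2) * Lap (f k) x" for k
      using homog_lap[OF gf hf, of k] x t unfolding homog_def by simp
    have tt: "t^2 * t powi (int k - 2) = t ^ k" for k
      using t by (simp add: power_int_diff)
    have "(\<Sum>k\<le>n. c k * f k x * t^(k+2) - Lap (f k) x * t^k) = t^2 * (\<Sum>k\<le>n. c k * f k (t *\<^sub>R x) - Lap (f k) (t *\<^sub>R x))"
      unfolding sum_distrib_left
    proof (intro sum.cong refl)
      fix k
      have h: "t^2 * (t powi (int k - 2) * Lap (f k) x) = t ^ k * Lap (f k) x"
        using tt[of k] by (simp add: mult.assoc[symmetric])
      show "c k * f k x * t^(k+2) - Lap (f k) x * t^k = t^2 * (c k * f k (t *\<^sub>R x) - Lap (f k) (t *\<^sub>R x))"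
        unfolding fk lk right_diff_distrib h by (simp add: algebra_simps power_add power2_eq_square)
    qed
    also have "\<dots> = 0" using key tx by simp
    finally have e0: "(\<Sum>k\<le>n. c k * f k x * t^(k+2) - Lap (f k) x * t^k) = 0" .
    have "(\<Sum>m\<le>n+2. a m * t^m) = (\<Sum>m\<le>n+2. (if 2 \<le> m then (\<lambda>k. c k * f k x * t^(k+2)) (m-2) else 0))
         - (\<Sum>m\<le>n+2. if m \<le> n then Lap (f m) x * t^m else 0)"
      unfolding sum_subtractf[symmetric] a_def
    proof (intro sum.cong refl)
      fix m :: nat
      show "((if 2 \<le> m then c (m - 2) * f (m - 2) x else 0) - (if m \<le> n then Lap (f m) x else 0)) * t ^ m =
         (if 2 \<le> m then (\<lambda>k. c k * f k x * t ^ (k + 2)) (m - 2) else 0) - (if m \<le> n then Lap (f m) x * t ^ m else 0)"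
      proof (cases "2 \<le> m")
        case True
        then have "m - 2 + 2 = m" by simp
        then show ?thesis using True by (simp add: algebra_simps)
      qed simp
    qed
    also have "\<dots> = (\<Sum>k\<le>n. c k * f k x * t^(k+2)) - (\<Sum>k\<le>n. Lap (f k) x * t^k)"
      using shift2[where M=n and h="\<lambda>k. c k * f k x * t^(k+2)"] sum_if_le[where n=n and f="\<lambda>m. Lap (f m) x * t^m"] by simp
    also have "\<dots> = 0" using e0 by (simp add: sum_subtractf)
    finally show ?thesis .
  qed
  have "{0<..} \<subseteq> {t. (\<Sum>m\<le>n+2. a m * t^m) = 0}" using z by auto
  then have "\<not> finite {t. (\<Sum>m\<le>n+2. a m * t^m) = (0::real)}"
    using infinite_Ioi[of "0::real"] finite_subset by blast
  then have "\<forall>m\<le>n+2. a m = 0" using polyfun_finite_roots[where n="n+2" and c=a] by auto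
  then show ?thesis by (simp add: a_def)
qed

end

context dlap begin

lemma main:
  fixes \<omega> E :: real and n :: nat and p :: "('n \<Rightarrow> nat) \<Rightarrow> real"
  assumes omega: "\<omega> > 0" and pp: "is_poly p" and pd: "deg_le n p"
    and ptop: "hom_part n p \<noteq> (\<lambda>_. 0)"
    and eig: "\<forall>x\<in>regular_set R.
       \<omega>^2 * (norm x)^2 * (peval p x * exp (-(\<omega>/2) * (norm x)^2))
       - dunkl_lap R u0 \<kappa> (\<lambda>y. peval p y * exp (-(\<omega>/2) * (norm y)^2)) x
       = E * (peval p x * exp (-(\<omega>/2) * (norm x)^2))"
  shows "E = \<omega> * (real CARD('n) + 2 * gamma_k R u0 \<kappa> + 2 * real n)
    \<and> (\<forall>i::nat. 1 \<le> i \<and> 2 * i \<le> n + 1 \<longrightarrow> hom_part (n + 1 - 2 * i) p = (\<lambda>_. 0))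
    \<and> (\<forall>i::nat. 2 * i \<le> n \<longrightarrow> (\<forall>x\<in>regular_set R.
          peval (hom_part (n - 2 * i) p) x =
          (1 / fact i) * (((\<lambda>f y. - dunkl_lap R u0 \<kappa> f y / (4 * \<omega>)) ^^ i)
                            (peval (hom_part n p))) x))
    \<and> (\<forall>x\<in>regular_set R.
          peval p x = (\<Sum>j. (1 / fact j) * (((\<lambda>f y. - dunkl_lap R u0 \<kappa> f y / (4 * \<omega>)) ^^ j)
                            (peval (hom_part n p))) x))"
proof -
  define pk where "pk k = peval (hom_part k p)" for k
  define c where "c k = \<omega> * (real CARD('n) + 2 * gamma_k R u0 \<kappa>) + 2 * \<omega> * real k - E" for k
  define L where "L = (\<lambda>f y. - dunkl_lap R u0 \<kappa> f y / (4 * \<omega>))"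
  have gpk: "good (pk k)" for k unfolding pk_def by (rule nice_good[OF nice_peval[OF is_poly_hom[OF pp]]])
  have hpk: "homog (int k) (pk k)" for k
    unfolding homog_def pk_def using peval_hom_scale[OF pp] by simp
  have pk_high: "n < k \<Longrightarrow> pk k = (\<lambda>_. 0)" for k
  proof -
    assume "n < k"
    then have h: "hom_part k p = (\<lambda>_. 0)" by (rule hom_part_high[OF pd])
    show ?thesis unfolding pk_def h by (simp add: peval_zero fun_eq_iff)
  qed
  have lap_high: "n < k \<Longrightarrow> x \<in> U \<Longrightarrow> Lap (pk k) x = 0" for k x
    using pk_high by (intro Lap_zeroU) auto
  have key: "\<forall>x\<in>U. (\<Sum>k\<le>n. c k * pk k x - Lap (pk k) x) = 0"
    using main_part1[OF omega pp pd eig] unfolding c_def pk_def .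
  have sep: "\<forall>m\<le>n+2. (if 2 \<le> m then c (m-2) * pk (m-2) x else 0) - (if m \<le> n then Lap (pk m) x else 0) = 0"
    if "x \<in> U" for x
    by (rule separation[OF gpk hpk key that])
  have rel: "c k * pk k x = Lap (pk (k+2)) x" if x: "x \<in> U" and k: "k \<le> n" for k x
  proof -
    have "(if 2 \<le> k + 2 then c (k+2-2) * pk (k+2-2) x else 0) - (if k + 2 \<le> n then Lap (pk (k+2)) x else 0) = 0"
      using sep[OF x, rule_format, of "k+2"] k by (simp only: add_le_mono1 simp_thms)
    then have "c k * pk k x - (if k + 2 \<le> n then Lap (pk (k+2)) x else 0) = 0"
      by (simp only: le_add2 if_True add_diff_cancel_right')
    then have e: "c k * pk k x = (if k + 2 \<le> n then Lap (pk (k+2)) x else 0)"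
      by (simp only: right_minus_eq)
    show ?thesis
    proof (cases "k + 2 \<le> n")
      case True then show ?thesis using e by simp
    next
      case False
      then have "Lap (pk (k+2)) x = 0" using lap_high[of "k+2" x] x by simp
      then show ?thesis using e False by simp
    qed
  qed
  have low0: "Lap (pk 0) x = 0" if x: "x \<in> U" for x
    using sep[OF x, rule_format, of 0] by simp
  have low1: "Lap (pk 1) x = 0" if x: "x \<in> U" for x
  proof -
    have "(if 2 \<le> (1::nat) then c (1-2) * pk (1-2) x else 0) - (if 1 \<le> n then Lap (pk 1) x else 0) = 0"
      using sep[OF x, rule_format, of 1] by simp
    then have e: "(if 1 \<le> n then Lap (pk 1) x else 0) = 0" by simp
    show ?thesis
    proof (cases "1 \<le> n")
      case True then show ?thesis using e by simp
    next
      case False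
      then show ?thesis using lap_high[of 1 x] x by simp
    qed
  qed
  obtain x0 where x0: "x0 \<in> U" "pk n x0 \<noteq> 0"
  proof (rule ccontr)
    assume "\<not> thesis"
    then have "\<forall>x\<in>U. peval (hom_part n p) x = 0" using that unfolding pk_def by blast
    then show False using poly_ident[OF is_poly_hom[OF pp]] ptop by blast
  qed
  have "c n * pk n x0 = 0" using rel[OF x0(1) order_refl] lap_high[of "n+2" x0] x0 by simp
  then have cn: "c n = 0" using x0 by simp
  then have Eeq: "E = \<omega> * (real CARD('n) + 2 * gamma_k R u0 \<kappa> + 2 * real n)"
    unfolding c_def by (simp add: algebra_simps)
  have ck: "c k = 2 * \<omega> * (real k - real n)" for k
    unfolding c_def Eeq by (simp add: algebra_simps)
  have zero_step: "\<forall>x\<in>U. pk k x = 0" if k: "k < n" and z: "\<forall>x\<in>U. pk (k+2) x = 0" for k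
  proof
    fix x assume x: "x \<in> U"
    have "c k * pk k x = 0" using rel[OF x] k Lap_zeroU[OF z x] by simp
    moreover have "c k \<noteq> 0" using ck k omega by simp
    ultimately show "pk k x = 0" by simp
  qed
  have c2: "\<forall>x\<in>U. pk (n + 1 - 2 * Suc i) x = 0" if "2 * Suc i \<le> n + 1" for i
    using that
  proof (induction i)
    case 0
    have "\<forall>x\<in>U. pk (n - 1 + 2) x = 0" using 0 pk_high[of "n+1"] by simp
    then have "\<forall>x\<in>U. pk (n - 1) x = 0" by (rule zero_step[rotated]) (use 0 in auto)
    then show ?case by simp
  next
    case (Suc i)
    have "\<forall>x\<in>U. pk (n + 1 - 2 * Suc i) x = 0" using Suc by simp
    moreover have "n + 1 - 2 * Suc (Suc i) + 2 = n + 1 - 2 * Suc i" using Suc.prems by simp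
    ultimately have "\<forall>x\<in>U. pk (n + 1 - 2 * Suc (Suc i) + 2) x = 0" by simp
    then show ?case by (rule zero_step[rotated]) (use Suc.prems in auto)
  qed
  have concl2: "\<forall>i::nat. 1 \<le> i \<and> 2 * i \<le> n + 1 \<longrightarrow> hom_part (n + 1 - 2 * i) p = (\<lambda>_. 0)"
  proof (intro allI impI)
    fix i :: nat assume i: "1 \<le> i \<and> 2 * i \<le> n + 1"
    then obtain j where j: "i = Suc j" by (cases i) auto
    have "\<forall>x\<in>U. peval (hom_part (n + 1 - 2 * i) p) x = 0" using c2[of j] i j unfolding pk_def by simp
    then show "hom_part (n + 1 - 2 * i) p = (\<lambda>_. 0)" by (intro poly_ident is_poly_hom pp)
  qed
  have gF: "good ((L ^^ i) (pk n))" for i unfolding L_def by (rule good_Lpow[OF gpk])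
  have c3: "\<forall>x\<in>U. pk (n - 2 * i) x = (1 / fact i) * (L ^^ i) (pk n) x" if "2 * i \<le> n" for i
    using that
  proof (induction i)
    case 0 then show ?case by simp
  next
    case (Suc i)
    let ?F = "(L ^^ i) (pk n)"
    have IH: "\<forall>x\<in>U. ?F x = fact i * pk (n - 2 * i) x"
      using Suc by (simp add: field_simps)
    show ?case
    proof
      fix x assume x: "x \<in> U"
      have "Lap ?F x = Lap (\<lambda>y. fact i * pk (n - 2 * i) y) x" using IH x by (intro lap_cong) auto
      also have "\<dots> = fact i * Lap (pk (n - 2 * i)) x" using gpk x by (intro lap_scal) auto
      finally have lF: "Lap ?F x = fact i * Lap (pk (n - 2 * i)) x" .
      have kk: "n - 2 * Suc i + 2 = n - 2 * i" using Suc.prems by simp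
      have r: "c (n - 2 * Suc i) * pk (n - 2 * Suc i) x = Lap (pk (n - 2 * i)) x"
        using rel[OF x, of "n - 2 * Suc i"] kk by simp
      have K: "c (n - 2 * Suc i) = - (4 * \<omega> * real (Suc i))"
        unfolding ck using Suc.prems by (simp add: of_nat_diff algebra_simps)
      have nz: "c (n - 2 * Suc i) \<noteq> 0" unfolding K using omega by simp
      have "pk (n - 2 * Suc i) x = Lap (pk (n - 2 * i)) x / c (n - 2 * Suc i)"
        using r nz by (simp add: field_simps)
      also have "\<dots> = - Lap (pk (n - 2 * i)) x / (4 * \<omega> * real (Suc i))"
        unfolding K by simp
      finally have "pk (n - 2 * Suc i) x = - Lap (pk (n - 2 * i)) x / (4 * \<omega> * real (Suc i))" .
      also have "\<dots> = (1 / fact (Suc i)) * (L ^^ Suc i) (pk n) x"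
      proof -
        have "(L ^^ Suc i) (pk n) x = - Lap ?F x / (4 * \<omega>)" by (simp add: L_def)
        also have "\<dots> = - (fact i * Lap (pk (n - 2 * i)) x) / (4 * \<omega>)" unfolding lF ..
        finally have e: "(L ^^ Suc i) (pk n) x = - (fact i * Lap (pk (n - 2 * i)) x) / (4 * \<omega>)" .
        have ab: "1 / (s * f) * (- (f * X) / (4 * w)) = - X / (4 * w * s)"
          if "f \<noteq> 0" "s \<noteq> 0" "w \<noteq> 0" for s f w X :: real
          using that by (simp add: field_simps)
        show ?thesis unfolding e fact_Suc of_nat_Suc[symmetric]
          by (rule ab[symmetric]) (use omega in auto)
      qed
      finally show "pk (n - 2 * Suc i) x = (1 / fact (Suc i)) * (L ^^ Suc i) (pk n) x" .
    qed
  qed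
  let ?j0 = "n div 2"
  have v0: "\<forall>y\<in>U. (L ^^ Suc ?j0) (pk n) y = 0"
  proof
    fix y assume y: "y \<in> U"
    have "\<forall>x\<in>U. (L ^^ ?j0) (pk n) x = fact ?j0 * pk (n - 2 * ?j0) x"
      using c3[of ?j0] by (simp add: field_simps)
    then have "Lap ((L ^^ ?j0) (pk n)) y = Lap (\<lambda>x. fact ?j0 * pk (n - 2 * ?j0) x) y"
      using y by (intro lap_cong) auto
    also have "\<dots> = fact ?j0 * Lap (pk (n - 2 * ?j0)) y" using gpk y by (intro lap_scal) auto
    also have "Lap (pk (n - 2 * ?j0)) y = 0"
    proof (cases "even n")
      case True then have "n - 2 * ?j0 = 0" by auto
      then show ?thesis using low0[OF y] by simp
    next
      case False then have "n - 2 * ?j0 = 1" by presburger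
      then show ?thesis using low1[OF y] by simp
    qed
    finally show "(L ^^ Suc ?j0) (pk n) y = 0" by (simp add: L_def)
  qed
  have vj: "\<forall>y\<in>U. (L ^^ j) (pk n) y = 0" if "?j0 < j" for j
  proof -
    have "j = (j - Suc ?j0) + Suc ?j0" using that by simp
    then have "(L ^^ j) (pk n) = (L ^^ (j - Suc ?j0)) ((L ^^ Suc ?j0) (pk n))"
      by (metis funpow_add o_apply)
    then show ?thesis using Lpow_zero[OF v0, of "j - Suc ?j0"] unfolding L_def by simp
  qed
  have concl4: "\<forall>x\<in>U. peval p x = (\<Sum>j. (1 / fact j) * (L ^^ j) (pk n) x)"
  proof
    fix x assume x: "x \<in> U"
    have "(\<Sum>j. (1 / fact j) * (L ^^ j) (pk n) x) = (\<Sum>j\<le>?j0. (1 / fact j) * (L ^^ j) (pk n) x)"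
      by (rule suminf_finite) (use vj x in auto)
    also have "\<dots> = (\<Sum>j\<le>?j0. pk (n - 2 * j) x)"
      using c3 x by (intro sum.cong refl) auto
    also have "\<dots> = sum (\<lambda>k. pk k x) ((\<lambda>j. n - 2 * j) ` {..?j0})"
      by (subst sum.reindex) (auto simp: inj_on_def)
    also have "\<dots> = (\<Sum>k\<le>n. pk k x)"
    proof (rule sum.mono_neutral_left)
      show "(\<lambda>j. n - 2 * j) ` {..?j0} \<subseteq> {..n}" by auto
      show "\<forall>k\<in>{..n} - (\<lambda>j. n - 2 * j) ` {..?j0}. pk k x = 0"
      proof
        fix k assume k: "k \<in> {..n} - (\<lambda>j. n - 2 * j) ` {..?j0}"
        have "odd (n - k)"
        proof
          assume ev: "even (n - k)"
          have "k = n - 2 * ((n - k) div 2)" using ev k by auto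
          moreover have "(n - k) div 2 \<le> ?j0" by (simp add: div_le_mono)
          ultimately show False using k by blast
        qed
        then have "n - k = 2 * ((n - k + 1) div 2) - 1 \<and> 1 \<le> (n - k + 1) div 2" by presburger
        then obtain i where i: "n - k = 2 * i - 1" "1 \<le> i" by blast
        have "2 * i \<le> n + 1" "k = n + 1 - 2 * i" using i k by auto
        then have h: "hom_part k p = (\<lambda>_. 0)" using concl2 i by auto
        show "pk k x = 0" unfolding pk_def h by (simp add: peval_zero)
      qed
    qed auto
    also have "\<dots> = peval p x" using peval_decomp[OF pp pd order_refl] by (simp add: pk_def)
    finally show "peval p x = (\<Sum>j. (1 / fact j) * (L ^^ j) (pk n) x)" by simp
  qed
  show ?thesis
    using Eeq concl2 c3 concl4 unfolding pk_def L_def by auto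
qed

end

theorem mainTheorem14:
  fixes R :: "(real^'n) set" and u0 :: "real^'n" and \<kappa> :: "real^'n \<Rightarrow> real"
    and \<omega> E :: real and n :: nat and p :: "('n \<Rightarrow> nat) \<Rightarrow> real"
  assumes R: "root_system R"
    and u0: "\<forall>v\<in>R. u0 \<bullet> v \<noteq> 0"
    and kappa: "mult_fn R \<kappa>"
    and omega: "\<omega> > 0"
    and p_poly: "is_poly p"
    and p_deg: "deg_le n p"
    and p_top: "hom_part n p \<noteq> (\<lambda>_. 0)"
    and eig: "\<forall>x\<in>regular_set R.
       \<omega>^2 * (norm x)^2 * (peval p x * exp (-(\<omega>/2) * (norm x)^2))
       - dunkl_lap R u0 \<kappa> (\<lambda>y. peval p y * exp (-(\<omega>/2) * (norm y)^2)) x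
       = E * (peval p x * exp (-(\<omega>/2) * (norm x)^2))"
  shows "E = \<omega> * (real CARD('n) + 2 * gamma_k R u0 \<kappa> + 2 * real n)
    \<and> (\<forall>i::nat. 1 \<le> i \<and> 2 * i \<le> n + 1 \<longrightarrow> hom_part (n + 1 - 2 * i) p = (\<lambda>_. 0))
    \<and> (\<forall>i::nat. 2 * i \<le> n \<longrightarrow> (\<forall>x\<in>regular_set R.
          peval (hom_part (n - 2 * i) p) x =
          (1 / fact i) * (((\<lambda>f y. - dunkl_lap R u0 \<kappa> f y / (4 * \<omega>)) ^^ i)
                            (peval (hom_part n p))) x))
    \<and> (\<forall>x\<in>regular_set R.
          peval p x = (\<Sum>j. (1 / fact j) * (((\<lambda>f y. - dunkl_lap R u0 \<kappa> f y / (4 * \<omega>)) ^^ j)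
                            (peval (hom_part n p))) x))"
proof -
  have fin: "finite R" and z: "0 \<notin> R" and cl: "\<forall>u\<in>R. \<forall>v\<in>R. refl v u \<in> R"
    using R unfolding root_system_def by auto
  interpret dlap R u0 \<kappa>
    by unfold_locales (use fin z cl in auto)
  show ?thesis by (rule main[OF omega p_poly p_deg p_top eig])
qed

end
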